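(* Let $\mathsf{X}=\mathsf{Y}=\mathbb{R}^d$ with probability measures $\mu,\nu$ and cost $c(x,y)=\|x-y\|^2$, let $\pi_\varepsilon$ be the $(c,\varepsilon)$-cyclically invariant coupling for each $\varepsilon>0$ (assumed to exist), and assume $\pi_\varepsilon\to\pi_*$ weakly as $\varepsilon\to0$ for some $\pi_*\in\Pi(\mu,\nu)$. Let $\Gamma:=\operatorname{spt}\pi_*$, $\mathsf{X}_0:=\operatorname{proj}_{\mathsf{X}}\Gamma$, $\mathsf{Y}_0:=\operatorname{proj}_{\mathsf{Y}}\Gamma$. Assume there exists a Kantorovich potential $\psi$ such that $I(x,y)=c(x,y)-\psi^c(y)+\psi(x)$ for all $(x,y)\in\mathsf{X}_0\times\mathsf{Y}_0$. Let $\mathsf{X}_0$ be strictly convex, let $\mu\ll\mathcal{L}^d$ (Lebesgue measure), and let $\operatorname{spt}\nu$ be at most countable with no accumulation points. Then $\{I=0\}\cap(\mathsf{X}_0\times\mathsf{Y}_0)=\Gamma$.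
   Context: $\mathsf{X}_0$ is strictly convex if for distinct $x,x'\in\mathsf{X}_0$ the open segment $(x,x')$ lies in $\operatorname{Int}\mathsf{X}_0$. $\Pi(\mu,\nu)$ is the set of couplings and $P:=\mu\otimes\nu$. A coupling $\pi$ is $(c,\varepsilon)$-cyclically invariant if $\pi\sim P$ and its density admits a version $\frac{d\pi}{dP}:\mathsf{X}\times\mathsf{Y}\to(0,\infty)$ with $\prod_{i=1}^k\frac{d\pi}{dP}(x_i,y_i)=\exp\big(-\frac1\varepsilon[\sum_{i=1}^k c(x_i,y_i)-\sum_{i=1}^k c(x_i,y_{i+1})]\big)\prod_{i=1}^k\frac{d\pi}{dP}(x_i,y_{i+1})$ for all $k$ and points, $y_{k+1}:=y_1$. A proper $\psi:\mathsf{X}\to(-\infty,\infty]$ is $c$-convex if $\psi(x)=\sup_y[\zeta(y)-c(x,y)]$ for some $\zeta:\mathsf{Y}\to[-\infty,\infty]$; $\psi^c(y):=\inf_x[\psi(x)+c(x,y)]$; $\partial_c\psi=\{(x,y):\psi^c(y)-\psi(x)=c(x,y)\}$; a Kantorovich potential is a $c$-convex $\psi$ with $\Gamma\subset\partial_c\psi$. The function $I$ is $I(x,y):=\sup_{k\ge2}\sup_{(x_i,y_i)_{i=2}^k\subset\Gamma}\sup_{\sigma\in\Sigma(k)}\sum_{i=1}^k c(x_i,y_i)-\sum_{i=1}^k c(x_i,y_{\sigma(i)})$ with $(x_1,y_1):=(x,y)$ and $\Sigma(k)$ the permutations of $\{1,\dots,k\}$. *)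

theory Defs
  imports "HOL-Probability.Probability"
begin

definition sqcost :: "'a::euclidean_space \<Rightarrow> 'a \<Rightarrow> real" where
  "sqcost x y = (norm (x - y))^2"

definition borel_prob :: "'a::topological_space measure \<Rightarrow> bool" where
  "borel_prob M \<longleftrightarrow> prob_space M \<and> sets M = sets borel"

definition couplings :: "'a::euclidean_space measure \<Rightarrow> 'b::euclidean_space measure
     \<Rightarrow> ('a \<times> 'b) measure set" where
  "couplings \<mu> \<nu> = {\<pi>. prob_space \<pi> \<and> sets \<pi> = sets borel \<and>
      distr \<pi> borel fst = \<mu> \<and> distr \<pi> borel snd = \<nu>}"

definition cyc_invariant ::
  "('a::euclidean_space \<Rightarrow> 'b::euclidean_space \<Rightarrow> real) \<Rightarrow> real \<Rightarrow> 'a measure \<Rightarrow> 'b measure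
    \<Rightarrow> ('a \<times> 'b) measure \<Rightarrow> bool" where
  "cyc_invariant c \<epsilon> \<mu> \<nu> \<pi> \<longleftrightarrow>
     \<pi> \<in> couplings \<mu> \<nu> \<and>
     absolutely_continuous (\<mu> \<Otimes>\<^sub>M \<nu>) \<pi> \<and> absolutely_continuous \<pi> (\<mu> \<Otimes>\<^sub>M \<nu>) \<and>
     (\<exists>f :: 'a \<times> 'b \<Rightarrow> real.
        f \<in> borel_measurable (\<mu> \<Otimes>\<^sub>M \<nu>) \<and> (\<forall>z. f z > 0) \<and>
        \<pi> = density (\<mu> \<Otimes>\<^sub>M \<nu>) (\<lambda>z. ennreal (f z)) \<and>
        (\<forall>k::nat. \<forall>x :: nat \<Rightarrow> 'a. \<forall>y :: nat \<Rightarrow> 'b. k \<ge> 1 \<longrightarrow>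
           (let y' = (\<lambda>i. if i = k then y 1 else y (Suc i)) in
             (\<Prod>i=1..k. f (x i, y i)) =
               exp (- (1 / \<epsilon>) * ((\<Sum>i=1..k. c (x i) (y i)) - (\<Sum>i=1..k. c (x i) (y' i))))
               * (\<Prod>i=1..k. f (x i, y' i)))))"

definition weak_conv_at0 :: "(real \<Rightarrow> 'a::topological_space measure) \<Rightarrow> 'a measure \<Rightarrow> bool" where
  "weak_conv_at0 P Q \<longleftrightarrow>
     (\<forall>f :: 'a \<Rightarrow> real. continuous_on UNIV f \<and> bounded (range f) \<longrightarrow>
        ((\<lambda>\<epsilon>. integral\<^sup>L (P \<epsilon>) f) \<longlongrightarrow> integral\<^sup>L Q f) (at_right 0))"

definition spt :: "'a::topological_space measure \<Rightarrow> 'a set" where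
  "spt M = {z. \<forall>U. open U \<and> z \<in> U \<longrightarrow> emeasure M U > 0}"

definition strictly_convex :: "'a::real_normed_vector set \<Rightarrow> bool" where
  "strictly_convex S \<longleftrightarrow> (\<forall>x\<in>S. \<forall>x'\<in>S. x \<noteq> x' \<longrightarrow> open_segment x x' \<subseteq> interior S)"

definition c_convex :: "('a \<Rightarrow> 'b \<Rightarrow> real) \<Rightarrow> ('a \<Rightarrow> ereal) \<Rightarrow> bool" where
  "c_convex c \<psi> \<longleftrightarrow> (\<forall>x. \<psi> x \<noteq> -\<infinity>) \<and> (\<exists>x. \<psi> x \<noteq> \<infinity>) \<and>
     (\<exists>\<zeta> :: 'b \<Rightarrow> ereal. \<forall>x. \<psi> x = (SUP y. \<zeta> y - ereal (c x y)))"

definition c_transform :: "('a \<Rightarrow> 'b \<Rightarrow> real) \<Rightarrow> ('a \<Rightarrow> ereal) \<Rightarrow> 'b \<Rightarrow> ereal" where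
  "c_transform c \<psi> y = (INF x. \<psi> x + ereal (c x y))"

definition c_subdiff :: "('a \<Rightarrow> 'b \<Rightarrow> real) \<Rightarrow> ('a \<Rightarrow> ereal) \<Rightarrow> ('a \<times> 'b) set" where
  "c_subdiff c \<psi> = {(x, y). c_transform c \<psi> y - \<psi> x = ereal (c x y)}"

definition kantorovich_potential ::
  "('a \<Rightarrow> 'b \<Rightarrow> real) \<Rightarrow> ('a \<times> 'b) set \<Rightarrow> ('a \<Rightarrow> ereal) \<Rightarrow> bool" where
  "kantorovich_potential c \<Gamma> \<psi> \<longleftrightarrow> c_convex c \<psi> \<and> \<Gamma> \<subseteq> c_subdiff c \<psi>"

definition I_fun :: "('a \<Rightarrow> 'b \<Rightarrow> real) \<Rightarrow> ('a \<times> 'b) set \<Rightarrow> 'a \<Rightarrow> 'b \<Rightarrow> ereal" where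
  "I_fun c \<Gamma> x y =
     (SUP t \<in> {(k, p, \<sigma>). (k::nat) \<ge> 2 \<and> (\<forall>i\<in>{2..k}. p i \<in> \<Gamma>) \<and> \<sigma> permutes {1..k}}.
        (case t of (k, p, \<sigma>) \<Rightarrow>
          (let q = p(1 := (x, y)) in
            ereal ((\<Sum>i=1..k. c (fst (q i)) (snd (q i))) - (\<Sum>i=1..k. c (fst (q i)) (snd (q (\<sigma> i))))))))"

end

theory Submission
  imports Defs
begin

lemma spt_closed: "closed (spt (M::'a::topological_space measure))"
proof -
  have "open (- spt M)"
    unfolding open_subopen[of "- spt M"]
  proof
    fix z assume "z \<in> - spt M"
    then obtain U where U: "open U" "z \<in> U" "\<not> emeasure M U > 0" unfolding spt_def by auto
    have "U \<subseteq> - spt M"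
    proof
      fix u assume "u \<in> U"
      then show "u \<in> - spt M" using U unfolding spt_def by auto
    qed
    then show "\<exists>T. open T \<and> z \<in> T \<and> T \<subseteq> - spt M" using U by blast
  qed
  then show ?thesis by (simp add: closed_def)
qed

lemma spt_null:
  fixes M :: "'a::second_countable_topology measure"
  assumes "sets M = sets borel"
  shows "UNIV - spt M \<in> null_sets M"
proof -
  define F where "F = {U. open U \<and> emeasure M U = 0}"
  have eq: "UNIV - spt M = \<Union>F"
    unfolding F_def spt_def by (auto simp: not_less zero_less_iff_neq_zero)
  obtain F' where F': "F' \<subseteq> F" "countable F'" "\<Union>F' = \<Union>F"
    using Lindelof[of F] unfolding F_def by auto
  have "(\<Union>U\<in>F'. U) \<in> null_sets M"
  proof (rule null_sets_UN')
    show "countable F'" by fact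
    fix U assume "U \<in> F'"
    then have "open U" "emeasure M U = 0" using F' unfolding F_def by auto
    moreover have "U \<in> sets M" using assms \<open>open U\<close> by auto
    ultimately show "U \<in> null_sets M" by auto
  qed
  then show ?thesis using eq F' by simp
qed

lemma spt_full:
  fixes M :: "'a::second_countable_topology measure"
  assumes "sets M = sets borel" "A \<in> sets M"
  shows "emeasure M (A \<inter> spt M) = emeasure M A"
proof -
  have "A \<inter> spt M = A - (UNIV - spt M)" by auto
  then show ?thesis using emeasure_Diff_null_set[OF spt_null[OF assms(1)] assms(2)] by simp
qed

lemma sqcost_shift:
  fixes w d y y' :: "'a::euclidean_space"
  shows "sqcost (w + d) y - sqcost (w + d) y' = sqcost w y - sqcost w y' + 2 * (d \<bullet> (y' - y))"
  unfolding sqcost_def power2_norm_eq_inner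
  by (simp add: inner_simps algebra_simps inner_commute)

lemma sqcost_affine:
  fixes x y y' :: "'a::euclidean_space"
  shows "sqcost x y' - sqcost x y = 2 * (x \<bullet> (y - y')) + (y' \<bullet> y' - y \<bullet> y)"
  unfolding sqcost_def power2_norm_eq_inner
  by (simp add: inner_simps algebra_simps inner_commute)

lemma convex_ereal_affine:
  fixes d :: "'a::euclidean_space"
  shows "convex {x. z \<le> ereal (K + 2 * (x \<bullet> d))}"
  unfolding convex_def
proof (intro ballI allI impI)
  fix x1 x2 :: 'a and u v :: real
  assume h: "x1 \<in> {x. z \<le> ereal (K + 2 * (x \<bullet> d))}" "x2 \<in> {x. z \<le> ereal (K + 2 * (x \<bullet> d))}"
     "0 \<le> u" "0 \<le> v" "u + v = 1"
  define a where "a = K + 2 * (x1 \<bullet> d)"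
  define b where "b = K + 2 * (x2 \<bullet> d)"
  have "K + 2 * ((u *\<^sub>R x1 + v *\<^sub>R x2) \<bullet> d) = u * a + v * b"
  proof -
    have v: "v = 1 - u" using h(5) by simp
    show ?thesis unfolding a_def b_def v by (simp add: inner_simps algebra_simps)
  qed
  moreover have "min a b \<le> u * a + v * b"
  proof -
    have "u * min a b \<le> u * a" "v * min a b \<le> v * b" using h(3,4) by (auto intro: mult_left_mono)
    then have "(u + v) * min a b \<le> u * a + v * b" by (simp add: algebra_simps)
    then show ?thesis using h(5) by simp
  qed
  moreover have "z \<le> ereal (min a b)" using h(1,2) unfolding a_def b_def by (simp add: min_def)
  ultimately show "u *\<^sub>R x1 + v *\<^sub>R x2 \<in> {x. z \<le> ereal (K + 2 * (x \<bullet> d))}"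
    by (metis (mono_tags, lifting) ereal_less_eq(3) mem_Collect_eq order_trans)
qed

theorem proposition5p5:
  fixes \<mu> \<nu> :: "'a::euclidean_space measure"
    and \<pi>\<epsilon> :: "real \<Rightarrow> ('a \<times> 'a) measure"
    and \<pi>\<^sub>s :: "('a \<times> 'a) measure"
  assumes \<mu>: "borel_prob \<mu>" and \<nu>: "borel_prob \<nu>"
    and cyc: "\<And>\<epsilon>. \<epsilon> > 0 \<Longrightarrow> cyc_invariant sqcost \<epsilon> \<mu> \<nu> (\<pi>\<epsilon> \<epsilon>)"
    and lim: "\<pi>\<^sub>s \<in> couplings \<mu> \<nu>" "weak_conv_at0 \<pi>\<epsilon> \<pi>\<^sub>s"
    and pot: "\<exists>\<psi>. kantorovich_potential sqcost (spt \<pi>\<^sub>s) \<psi> \<and>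
               (\<forall>x \<in> fst ` spt \<pi>\<^sub>s. \<forall>y \<in> snd ` spt \<pi>\<^sub>s.
                  I_fun sqcost (spt \<pi>\<^sub>s) x y
                    = ereal (sqcost x y) - c_transform sqcost \<psi> y + \<psi> x)"
    and sconv: "strictly_convex (fst ` spt \<pi>\<^sub>s)"
    and ac: "absolutely_continuous lborel \<mu>"
    and discr: "countable (spt \<nu>)" "\<forall>z. \<not> z islimpt spt \<nu>"
  shows "{(x, y). I_fun sqcost (spt \<pi>\<^sub>s) x y = 0} \<inter> (fst ` spt \<pi>\<^sub>s \<times> snd ` spt \<pi>\<^sub>s)
           = spt \<pi>\<^sub>s"
proof -
  define \<Gamma> where "\<Gamma> = spt \<pi>\<^sub>s"
  define c :: "'a \<Rightarrow> 'a \<Rightarrow> real" where "c = sqcost"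
  obtain \<psi> where kp: "kantorovich_potential sqcost \<Gamma> \<psi>"
    and Ieq: "\<forall>x\<in>fst ` \<Gamma>. \<forall>y\<in>snd ` \<Gamma>. I_fun sqcost \<Gamma> x y
                 = ereal (sqcost x y) - c_transform sqcost \<psi> y + \<psi> x"
    using pot unfolding \<Gamma>_def by blast
  define ct where "ct = c_transform sqcost \<psi>"
  define S where "S = c_subdiff sqcost \<psi>"
  have cconv: "c_convex sqcost \<psi>" and GS: "\<Gamma> \<subseteq> S"
    using kp unfolding kantorovich_potential_def S_def by auto
  have psi_ninf: "\<And>x. \<psi> x \<noteq> -\<infinity>" using cconv unfolding c_convex_def by auto
  obtain \<zeta> :: "'a \<Rightarrow> ereal" where zeta: "\<And>x. \<psi> x = (SUP y. \<zeta> y - ereal (sqcost x y))"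
    using cconv unfolding c_convex_def by auto
  have ct_le: "\<And>x y. ct y \<le> \<psi> x + ereal (sqcost x y)"
    unfolding ct_def c_transform_def by (rule INF_lower) simp
  have sub_fin: "\<exists>a b. \<psi> x = ereal a \<and> ct y = ereal b \<and> b - a = sqcost x y"
    if "(x, y) \<in> S" for x y
  proof -
    have e: "ct y - \<psi> x = ereal (sqcost x y)" using that unfolding S_def c_subdiff_def ct_def by auto
    show ?thesis using e psi_ninf[of x]
      by (cases "\<psi> x"; cases "ct y"; auto)
  qed
  have sub_I: "(x, y) \<in> S" if "\<psi> x = ereal a" "ct y = ereal b" "b - a = sqcost x y" for x y a b
    using that unfolding S_def c_subdiff_def ct_def by simp
  have spaceP: "space \<pi>\<^sub>s = UNIV" and setsP: "sets \<pi>\<^sub>s = sets borel"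
    and margX: "distr \<pi>\<^sub>s borel fst = \<mu>" and margY: "distr \<pi>\<^sub>s borel snd = \<nu>"
    using lim(1) unfolding couplings_def by (auto dest: sets_eq_imp_space_eq)
  have measP: "\<And>U. open U \<Longrightarrow> U \<in> sets \<pi>\<^sub>s" using setsP by auto
  have fstm: "fst \<in> measurable \<pi>\<^sub>s borel"
    using measurable_cong_sets[OF setsP refl] borel_measurable_continuous_onI[OF continuous_on_fst[OF continuous_on_id]]
    by (metis (no_types) measurable_cong_sets setsP)
  have sndm: "snd \<in> measurable \<pi>\<^sub>s borel"
    using measurable_cong_sets[OF setsP refl] borel_measurable_continuous_onI[OF continuous_on_snd[OF continuous_on_id]]
    by (metis (no_types) measurable_cong_sets setsP)
  have muA: "emeasure \<mu> A = emeasure \<pi>\<^sub>s (A \<times> UNIV)" if "A \<in> sets borel" for A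
  proof -
    have "emeasure \<mu> A = emeasure \<pi>\<^sub>s (fst -` A \<inter> space \<pi>\<^sub>s)"
      using margX emeasure_distr[OF fstm that] by simp
    also have "fst -` A \<inter> space \<pi>\<^sub>s = A \<times> UNIV" using spaceP by auto
    finally show ?thesis .
  qed
  have nuA: "emeasure \<nu> A = emeasure \<pi>\<^sub>s (UNIV \<times> A)" if "A \<in> sets borel" for A
  proof -
    have "emeasure \<nu> A = emeasure \<pi>\<^sub>s (snd -` A \<inter> space \<pi>\<^sub>s)"
      using margY emeasure_distr[OF sndm that] by simp
    also have "snd -` A \<inter> space \<pi>\<^sub>s = UNIV \<times> A" using spaceP by auto
    finally show ?thesis .
  qed
  have Gpos: "emeasure \<pi>\<^sub>s U > 0" if "open U" "p \<in> U" "p \<in> \<Gamma>" for U p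
    using that unfolding \<Gamma>_def spt_def by auto
  have Gfull: "emeasure \<pi>\<^sub>s (A \<inter> \<Gamma>) = emeasure \<pi>\<^sub>s A" if "A \<in> sets \<pi>\<^sub>s" for A
    unfolding \<Gamma>_def by (rule spt_full[OF setsP that])
  have Gclosed: "closed \<Gamma>" unfolding \<Gamma>_def by (rule spt_closed)
  have sndG: "snd ` \<Gamma> \<subseteq> spt \<nu>"
  proof
    fix b assume "b \<in> snd ` \<Gamma>"
    then obtain a where ab: "(a, b) \<in> \<Gamma>" by force
    show "b \<in> spt \<nu>" unfolding spt_def
    proof (intro CollectI allI impI, elim conjE)
      fix V :: "'a set" assume V: "open V" "b \<in> V"
      have "emeasure \<pi>\<^sub>s (UNIV \<times> V) > 0"
        by (rule Gpos[OF _ _ ab]) (use V in \<open>auto intro: open_Times\<close>)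
      then show "emeasure \<nu> V > 0" using nuA[of V] V by auto
    qed
  qed
  show ?thesis
  proof
    show "spt \<pi>\<^sub>s \<subseteq> {(x, y). I_fun sqcost (spt \<pi>\<^sub>s) x y = 0} \<inter> (fst ` spt \<pi>\<^sub>s \<times> snd ` spt \<pi>\<^sub>s)"
    proof
      fix p assume "p \<in> spt \<pi>\<^sub>s"
      then obtain x y where p: "p = (x, y)" "(x, y) \<in> \<Gamma>" unfolding \<Gamma>_def by (cases p) auto
      then have mem: "x \<in> fst ` \<Gamma>" "y \<in> snd ` \<Gamma>" by force+
      obtain a b where ab: "\<psi> x = ereal a" "ct y = ereal b" "b - a = sqcost x y"
        using sub_fin[of x y] GS p by auto
      have "I_fun sqcost \<Gamma> x y = ereal (sqcost x y) - ct y + \<psi> x"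
        using Ieq mem unfolding ct_def by blast
      then have "I_fun sqcost \<Gamma> x y = 0" using ab by simp
      then show "p \<in> {(x, y). I_fun sqcost (spt \<pi>\<^sub>s) x y = 0} \<inter> (fst ` spt \<pi>\<^sub>s \<times> snd ` spt \<pi>\<^sub>s)"
        using p mem unfolding \<Gamma>_def by auto
    qed
  next
    show "{(x, y). I_fun sqcost (spt \<pi>\<^sub>s) x y = 0} \<inter> (fst ` spt \<pi>\<^sub>s \<times> snd ` spt \<pi>\<^sub>s) \<subseteq> spt \<pi>\<^sub>s"
    proof
      fix p assume "p \<in> {(x, y). I_fun sqcost (spt \<pi>\<^sub>s) x y = 0} \<inter> (fst ` spt \<pi>\<^sub>s \<times> snd ` spt \<pi>\<^sub>s)"
      then obtain x y where pxy: "p = (x, y)" and I0: "I_fun sqcost \<Gamma> x y = 0"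
        and xX: "x \<in> fst ` \<Gamma>" and yY: "y \<in> snd ` \<Gamma>" unfolding \<Gamma>_def by blast
      from yY obtain x0 where x0: "(x0, y) \<in> \<Gamma>" by force
      obtain P where P: "ct y = ereal P" using sub_fin[of x0 y] x0 GS by auto
      have xyS: "(x, y) \<in> S"
      proof -
        have "I_fun sqcost \<Gamma> x y = ereal (sqcost x y) - ct y + \<psi> x"
          using Ieq xX yY unfolding ct_def by blast
        then have e: "ereal (sqcost x y) - ereal P + \<psi> x = 0" using I0 P by simp
        show ?thesis
        proof (cases "\<psi> x")
          case (real a) then show ?thesis using e P by (intro sub_I[of x a y P]) auto
        next
          case PInf then show ?thesis using e by simp
        next
          case MInf then show ?thesis using psi_ninf by simp
        qed
      qed
      define C where "C = {w. (w, y) \<in> S}"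
      have C_eq: "C = {w. \<psi> w \<le> ereal (P - sqcost w y)}"
      proof (intro set_eqI iffI)
        fix w assume "w \<in> C"
        then obtain a b where "\<psi> w = ereal a" "ct y = ereal b" "b - a = sqcost w y"
          using sub_fin unfolding C_def by blast
        then show "w \<in> {w. \<psi> w \<le> ereal (P - sqcost w y)}" using P by auto
      next
        fix w assume "w \<in> {w. \<psi> w \<le> ereal (P - sqcost w y)}"
        then have le: "\<psi> w \<le> ereal (P - sqcost w y)" by simp
        then obtain a where a: "\<psi> w = ereal a" using psi_ninf[of w] by (cases "\<psi> w") auto
        have "ereal P \<le> ereal a + ereal (sqcost w y)" using ct_le[of y w] P a by simp
        then have "P - a = sqcost w y" using le a by auto
        then show "w \<in> C" unfolding C_def using sub_I[OF a P] by simp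
      qed
      have "convex C"
      proof -
        have "C = (\<Inter>y'. {w. \<zeta> y' \<le> ereal ((P + (y' \<bullet> y' - y \<bullet> y)) + 2 * (w \<bullet> (y - y')))})"
        proof -
          have "\<psi> w \<le> ereal (P - sqcost w y) \<longleftrightarrow>
                (\<forall>y'. \<zeta> y' \<le> ereal ((P + (y' \<bullet> y' - y \<bullet> y)) + 2 * (w \<bullet> (y - y'))))" for w
          proof -
            have "\<psi> w \<le> ereal (P - sqcost w y) \<longleftrightarrow> (\<forall>y'. \<zeta> y' - ereal (sqcost w y') \<le> ereal (P - sqcost w y))"
              unfolding zeta by (simp add: SUP_le_iff)
            also have "\<dots> \<longleftrightarrow> (\<forall>y'. \<zeta> y' \<le> ereal ((P + (y' \<bullet> y' - y \<bullet> y)) + 2 * (w \<bullet> (y - y'))))"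
            proof -
              have "\<zeta> y' - ereal (sqcost w y') \<le> ereal (P - sqcost w y) \<longleftrightarrow>
                    \<zeta> y' \<le> ereal ((P + (y' \<bullet> y' - y \<bullet> y)) + 2 * (w \<bullet> (y - y')))" for y'
              proof -
                have "P - sqcost w y + sqcost w y' = (P + (y' \<bullet> y' - y \<bullet> y)) + 2 * (w \<bullet> (y - y'))"
                  using sqcost_affine[of w y' y] by simp
                then show ?thesis by (cases "\<zeta> y'") auto
              qed
              then show ?thesis by simp
            qed
            finally show ?thesis .
          qed
          then show ?thesis unfolding C_eq by auto
        qed
        then show ?thesis by (auto intro!: convex_INT convex_ereal_affine)
      qed
      have int_disj: "y' = y" if w: "w \<in> interior C" "(w, y') \<in> S" for w y'
      proof (rule ccontr)
        assume ne: "y' \<noteq> y"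
        obtain e where e: "e > 0" "ball w e \<subseteq> C" using w(1) by (meson mem_interior)
        obtain a Q where aQ: "\<psi> w = ereal a" "ct y' = ereal Q" "Q - a = sqcost w y'" using sub_fin w(2) by blast
        have "w \<in> C" using e by auto
        then have "a \<le> P - sqcost w y" using C_eq aQ by auto
        moreover have "P \<le> a + sqcost w y" using ct_le[of y w] P aQ by simp
        ultimately have aP: "a = P - sqcost w y" by simp
        define d where "d = (e / (2 * norm (y' - y))) *\<^sub>R (y' - y)"
        have nd: "norm (y' - y) > 0" using ne by simp
        have "norm d = e / 2" unfolding d_def using nd e by simp
        then have "w + d \<in> C" using e(2) e(1) by (auto simp: dist_norm intro!: subsetD[OF e(2)])
        then have le1: "\<psi> (w + d) \<le> ereal (P - sqcost (w + d) y)" using C_eq by auto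
        have le2: "ereal Q \<le> \<psi> (w + d) + ereal (sqcost (w + d) y')" using ct_le[of y' "w + d"] aQ by simp
        have "Q - sqcost (w + d) y' \<le> P - sqcost (w + d) y"
        proof -
          obtain b where b: "\<psi> (w + d) = ereal b" using le1 psi_ninf[of "w + d"] by (cases "\<psi> (w + d)") auto
          show ?thesis using le1 le2 b by simp
        qed
        moreover have "d \<bullet> (y' - y) > 0"
          unfolding d_def using nd e by (simp add: inner_commute power2_norm_eq_inner[symmetric])
        ultimately show False using sqcost_shift[of w d y y'] aP aQ(3) by linarith
      qed
      have key: "(w, y) \<in> \<Gamma>" if w: "w \<in> fst ` \<Gamma>" "w \<in> interior C" for w
      proof -
        obtain y0 where wy0: "(w, y0) \<in> \<Gamma>" using w(1) by force
        show ?thesis unfolding \<Gamma>_def spt_def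
        proof (intro CollectI allI impI, elim conjE)
          fix U :: "('a \<times> 'a) set" assume U: "open U" "(w, y) \<in> U"
          obtain A B where AB: "open A" "open B" "(w, y) \<in> A \<times> B" "A \<times> B \<subseteq> U"
            using open_prod_elim[OF U] by blast
          define A' where "A' = A \<inter> interior C"
          have A': "open A'" "w \<in> A'" "A' \<subseteq> interior C" using AB w unfolding A'_def by auto
          have pos: "emeasure \<pi>\<^sub>s (A' \<times> UNIV) > 0"
            by (rule Gpos[OF _ _ wy0]) (use A' in \<open>auto intro: open_Times\<close>)
          have "emeasure \<pi>\<^sub>s ((A' \<times> UNIV) \<inter> \<Gamma>) = emeasure \<pi>\<^sub>s (A' \<times> UNIV)"
            by (rule Gfull, rule measP) (use A' in \<open>auto intro: open_Times\<close>)
          moreover have "(A' \<times> UNIV) \<inter> \<Gamma> \<subseteq> U"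
          proof
            fix q assume q: "q \<in> (A' \<times> UNIV) \<inter> \<Gamma>"
            then obtain a b where ab: "q = (a, b)" "a \<in> A'" "(a, b) \<in> \<Gamma>" by (cases q) auto
            then have "b = y" using int_disj[of a b] A' GS by auto
            then show "q \<in> U" using ab AB unfolding A'_def by auto
          qed
          ultimately have "emeasure \<pi>\<^sub>s (A' \<times> UNIV) \<le> emeasure \<pi>\<^sub>s U"
            by (metis emeasure_mono measP U(1))
          then show "emeasure \<pi>\<^sub>s U > 0" using pos by simp
        qed
      qed
      define Gy where "Gy = {a. (a, y) \<in> \<Gamma>}"
      have Gy_closed: "closed Gy"
      proof -
        have "Gy = (\<lambda>a. (a, y)) -` \<Gamma>" unfolding Gy_def by auto
        moreover have "closed ((\<lambda>a. (a, y)) -` \<Gamma>)"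
          by (rule continuous_closed_vimage[OF Gclosed]) (intro continuous_intros)
        ultimately show ?thesis by simp
      qed
      have GyC: "Gy \<subseteq> C" using GS unfolding Gy_def C_def by blast
      have Gy_pos: "emeasure \<mu> Gy > 0"
      proof -
        obtain V where V: "open V" "y \<in> V" "\<forall>z\<in>spt \<nu>. z \<in> V \<longrightarrow> z = y"
        proof -
          have "\<not> y islimpt spt \<nu>" using discr(2) by simp
          then show ?thesis using that unfolding islimpt_def by (metis (no_types, lifting))
        qed
        have p1: "emeasure \<pi>\<^sub>s (UNIV \<times> V) > 0"
          by (rule Gpos[OF _ _ x0]) (use V in \<open>auto intro: open_Times\<close>)
        have "emeasure \<pi>\<^sub>s ((UNIV \<times> V) \<inter> \<Gamma>) = emeasure \<pi>\<^sub>s (UNIV \<times> V)"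
          by (rule Gfull, rule measP) (use V in \<open>auto intro: open_Times\<close>)
        moreover have "(UNIV \<times> V) \<inter> \<Gamma> \<subseteq> Gy \<times> UNIV"
        proof
          fix q assume q: "q \<in> (UNIV \<times> V) \<inter> \<Gamma>"
          then obtain a b where ab: "q = (a, b)" "b \<in> V" "(a, b) \<in> \<Gamma>" by (cases q) auto
          then have "b \<in> spt \<nu>" using sndG by force
          then have "b = y" using V ab by auto
          then show "q \<in> Gy \<times> UNIV" using ab unfolding Gy_def by auto
        qed
        moreover have "Gy \<times> UNIV \<in> sets \<pi>\<^sub>s"
        proof -
          have "closed (Gy \<times> (UNIV::'a set))" using Gy_closed by (intro closed_Times) auto
          then have "Gy \<times> (UNIV::'a set) \<in> sets borel" by (rule borel_closed)
          then show ?thesis using setsP by simp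
        qed
        ultimately have "emeasure \<pi>\<^sub>s (UNIV \<times> V) \<le> emeasure \<pi>\<^sub>s (Gy \<times> UNIV)"
          using emeasure_mono[of "(UNIV \<times> V) \<inter> \<Gamma>" "Gy \<times> UNIV" \<pi>\<^sub>s] by simp
        moreover have "Gy \<in> sets borel" using Gy_closed by (rule borel_closed)
        ultimately show ?thesis using p1 muA[of Gy] by simp
      qed
      obtain z where z: "z \<in> Gy" "z \<in> interior C"
      proof (rule ccontr)
        assume "\<not> thesis"
        then have "Gy \<subseteq> frontier C" using that GyC closure_subset unfolding frontier_def by blast
        then have "negligible Gy" using negligible_convex_frontier[OF \<open>convex C\<close>] negligible_subset by blast
        then have "Gy \<in> null_sets lebesgue" by (simp add: negligible_iff_null_sets)
        moreover have "Gy \<in> sets lborel" using Gy_closed by auto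
        ultimately have "Gy \<in> null_sets lborel" using null_sets_completion_iff[of Gy lborel] by simp
        then have "Gy \<in> null_sets \<mu>" using ac unfolding absolutely_continuous_def by auto
        then show False using Gy_pos by auto
      qed
      have "x \<in> Gy"
      proof (cases "x \<in> interior C")
        case True then show ?thesis using key xX unfolding Gy_def by auto
      next
        case False
        then have zx: "z \<noteq> x" using z by auto
        have intC: "interior C \<noteq> {}" using z by auto
        have "x \<in> closure C" using xyS closure_subset[of C] unfolding C_def by blast
        then have seg1: "open_segment z x \<subseteq> interior C"
          using rel_interior_closure_convex_segment[OF \<open>convex C\<close>, of z x] z intC
          by (simp add: rel_interior_nonempty_interior)
        have "z \<in> fst ` \<Gamma>" using z unfolding Gy_def by force
        then have seg2: "open_segment z x \<subseteq> fst ` \<Gamma>"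
          using sconv zx xX interior_subset unfolding strictly_convex_def \<Gamma>_def by blast
        have "open_segment z x \<subseteq> Gy"
          using key seg1 seg2 unfolding Gy_def by blast
        then have "closure (open_segment z x) \<subseteq> Gy" using Gy_closed closure_minimal by blast
        then show ?thesis using zx by auto
      qed
      then show "p \<in> spt \<pi>\<^sub>s" unfolding Gy_def \<Gamma>_def pxy by simp
    qed
  qed
qed

end
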